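(* Let $\gamma\in C^1((0,\infty))$ be positive, and assume one of the following: (a) $\gamma$ is non-increasing on $(0,\infty)$ and there is $A>0$ with $\int_s^{2s}\gamma(\eta)\,d\eta\le A$ for all $s\ge1$; (b) there are $b_0\in(0,1]$ and $s_1>0$ with $s\gamma'(s)+b_0\gamma(s)\le0$ for all $s\ge s_1$; (c) there are constants $l>0$ and $0<B_l\le A_l<\infty$ with $(1-l)A_l<B_l$ and $B_l=\liminf_{s\to\infty}s^l\gamma(s)\le\limsup_{s\to\infty}s^l\gamma(s)=A_l$. Then $\gamma$ satisfies (A3).
   Context: (A3): there is $b_0\in(0,1]$ such that for every $s_0>0$ there exists $K_0(s_0)>0$ (depending only on $\gamma$, $b_0$, $s_0$) with $s\gamma(s)+(b_0-1)\int_1^s\gamma(\eta)\,d\eta\le K_0(s_0)$ for all $s\ge s_0$. *)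

theory Defs
  imports "HOL-Analysis.Analysis"
begin

definition oint :: "real \<Rightarrow> real \<Rightarrow> (real \<Rightarrow> real) \<Rightarrow> real" where
  "oint a b f = (if a \<le> b then integral {a..b} f else - integral {b..a} f)"

definition A3 :: "(real \<Rightarrow> real) \<Rightarrow> bool" where
  "A3 \<gamma> \<longleftrightarrow> (\<exists>b0. 0 < b0 \<and> b0 \<le> 1 \<and>
     (\<forall>s0>0. \<exists>K0>0. \<forall>s\<ge>s0. s * \<gamma> s + (b0 - 1) * oint 1 s \<gamma> \<le> K0))"

end

theory Submission
  imports Defs
begin


lemma A3I:
  fixes \<gamma> :: "real \<Rightarrow> real"
  assumes cg: "continuous_on {0<..} \<gamma>" and pos: "\<And>s. s>0 \<Longrightarrow> \<gamma> s > 0"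
    and b: "0 < b0" "b0 \<le> 1"
    and S: "\<And>s. s \<ge> S \<Longrightarrow> s * \<gamma> s + (b0 - 1) * oint 1 s \<gamma> \<le> K"
  shows "A3 \<gamma>"
proof -
  have intg: "\<gamma> integrable_on {a..b}" if "a > 0" for a b
    by (rule integrable_continuous_interval, rule continuous_on_subset[OF cg]) (use that in auto)
  have nn: "\<gamma> x \<ge> 0" if "x > 0" for x using pos[OF that] by simp
  have inn: "integral {a..b} \<gamma> \<ge> 0" if "a > 0" for a b
    by (rule integral_nonneg[OF intg[OF that]]) (use that nn in simp)
  have "\<forall>s0>0. \<exists>K0>0. \<forall>s\<ge>s0. s * \<gamma> s + (b0 - 1) * oint 1 s \<gamma> \<le> K0"
  proof (intro allI impI)
    fix s0 :: real assume s0: "s0 > 0"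
    define T where "T = max s0 S"
    have "continuous_on {s0..T} (\<lambda>s. s * \<gamma> s)"
      by (intro continuous_intros continuous_on_subset[OF cg]) (use s0 in auto)
    then obtain x where x: "x \<in> {s0..T}" "\<forall>y\<in>{s0..T}. y * \<gamma> y \<le> x * \<gamma> x"
      using continuous_attains_sup[OF compact_Icc, of s0 T "\<lambda>s. s * \<gamma> s"] T_def by auto
    define C0 where "C0 = integral {min s0 1..1} \<gamma>"
    have C0: "C0 \<ge> 0" unfolding C0_def by (rule inn) (use s0 in auto)
    have oi: "(b0 - 1) * oint 1 s \<gamma> \<le> C0" if "s \<ge> s0" for s
    proof (cases "1 \<le> s")
      case True
      then have "oint 1 s \<gamma> \<ge> 0" unfolding oint_def using inn[of 1 s] by auto
      then have "(b0 - 1) * oint 1 s \<gamma> \<le> 0" using b by (simp add: mult_nonpos_nonneg)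
      then show ?thesis using C0 by linarith
    next
      case False
      then have eq: "oint 1 s \<gamma> = - integral {s..1} \<gamma>" unfolding oint_def by auto
      have I0: "integral {s..1} \<gamma> \<ge> 0" using inn[of s 1] s0 that by auto
      have "integral {s..1} \<gamma> \<le> C0" unfolding C0_def
        by (rule integral_subset_le) (use s0 that False intg nn in auto)
      moreover have "(1 - b0) * integral {s..1} \<gamma> \<le> integral {s..1} \<gamma>"
        using b I0 by (simp add: mult_left_le_one_le)
      ultimately show ?thesis using eq by (simp add: algebra_simps)
    qed
    show "\<exists>K0>0. \<forall>s\<ge>s0. s * \<gamma> s + (b0 - 1) * oint 1 s \<gamma> \<le> K0"
    proof (intro exI[of _ "max 1 (max K (x * \<gamma> x + C0))"] conjI allI impI)
      fix s assume s: "s0 \<le> s"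
      show "s * \<gamma> s + (b0 - 1) * oint 1 s \<gamma> \<le> max 1 (max K (x * \<gamma> x + C0))"
      proof (cases "s \<ge> S")
        case True then show ?thesis using S[OF True] by linarith
      next
        case False
        then have "s \<in> {s0..T}" using s T_def by auto
        then show ?thesis using x(2) oi[OF s] by fastforce
      qed
    qed auto
  qed
  then show ?thesis unfolding A3_def using b by blast
qed


lemma intder:
  fixes \<gamma> :: "real \<Rightarrow> real"
  assumes cg: "continuous_on {0<..} \<gamma>" and c: "0 < c" "c < x"
  shows "((\<lambda>u. integral {c..u} \<gamma>) has_real_derivative \<gamma> x) (at x)"
proof -
  have "((\<lambda>u. integral {c..u} \<gamma>) has_real_derivative \<gamma> x) (at x within {c..x+1})"
    by (rule integral_has_real_derivative, rule continuous_on_subset[OF cg]) (use c in auto)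
  then show ?thesis using c by (simp add: at_within_Icc_at)
qed

lemma oint_split:
  fixes \<gamma> :: "real \<Rightarrow> real"
  assumes cg: "continuous_on {0<..} \<gamma>" and c: "0 < c" "c \<le> 1" "c \<le> s"
  shows "oint 1 s \<gamma> = integral {c..s} \<gamma> - integral {c..1} \<gamma>"
proof -
  have intg: "\<gamma> integrable_on {a..b}" if "a > 0" for a b
    by (rule integrable_continuous_interval, rule continuous_on_subset[OF cg]) (use that in auto)
  show ?thesis
  proof (cases "1 \<le> s")
    case True
    have "integral {c..s} \<gamma> = integral {c..1} \<gamma> + integral {1..s} \<gamma>"
      by (rule Henstock_Kurzweil_Integration.integral_combine[symmetric]) (use c True intg in auto)
    then show ?thesis using True unfolding oint_def by simp
  next
    case False
    have "integral {c..1} \<gamma> = integral {c..s} \<gamma> + integral {s..1} \<gamma>"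
      by (rule Henstock_Kurzweil_Integration.integral_combine[symmetric]) (use c False intg in auto)
    then show ?thesis using False unfolding oint_def by simp
  qed
qed

lemma caseA:
  fixes \<gamma> :: "real \<Rightarrow> real"
  assumes cg: "continuous_on {0<..} \<gamma>" and pos: "\<And>s. s>0 \<Longrightarrow> \<gamma> s > 0"
    and mono: "\<forall>s t. 0 < s \<and> s \<le> t \<longrightarrow> \<gamma> t \<le> \<gamma> s"
    and A: "\<forall>s\<ge>1. integral {s .. 2 * s} \<gamma> \<le> A"
  shows "A3 \<gamma>"
proof (rule A3I[OF cg pos, of 1 2 "2 * A"])
  fix s :: real assume s: "2 \<le> s"
  define t where "t = s / 2"
  have t: "1 \<le> t" "2 * t = s" using s t_def by auto
  have intg: "\<gamma> integrable_on {t..2*t}"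
    by (rule integrable_continuous_interval, rule continuous_on_subset[OF cg]) (use t in auto)
  have "integral {t..2*t} (\<lambda>x. \<gamma> s) \<le> integral {t..2*t} \<gamma>"
    by (rule integral_le[OF _ intg]) (use t mono in auto)
  then have "t * \<gamma> s \<le> A" using A t by simp (smt (verit))
  moreover have "s * \<gamma> s = 2 * (t * \<gamma> s)" using t by simp
  ultimately have "s * \<gamma> s \<le> 2 * A" by linarith
  then show "s * \<gamma> s + (1 - 1) * oint 1 s \<gamma> \<le> 2 * A" by simp
qed auto

lemma caseB:
  fixes \<gamma> \<gamma>' :: "real \<Rightarrow> real"
  assumes deriv: "\<And>s. s > 0 \<Longrightarrow> (\<gamma> has_real_derivative \<gamma>' s) (at s)"
    and cg: "continuous_on {0<..} \<gamma>" and pos: "\<And>s. s>0 \<Longrightarrow> \<gamma> s > 0"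
    and b: "0 < b0" "b0 \<le> 1" and s1: "s1 > 0"
    and H: "\<forall>s\<ge>s1. s * \<gamma>' s + b0 * \<gamma> s \<le> 0"
  shows "A3 \<gamma>"
proof -
  define c where "c = min 1 s1 / 2"
  have c: "0 < c" "c \<le> 1" "c < s1" using s1 c_def by auto
  define g where "g = (\<lambda>s. s * \<gamma> s + (b0 - 1) * (integral {c..s} \<gamma> - integral {c..1} \<gamma>))"
  have gle: "g s \<le> g s1" if "s \<ge> s1" for s
  proof (rule DERIV_nonpos_imp_nonincreasing[OF that])
    fix x assume x: "s1 \<le> x" "x \<le> s"
    have x0: "x > 0" "c < x" using x c s1 by auto
    have d1: "((\<lambda>z. z * \<gamma> z) has_real_derivative (1 * \<gamma> x + \<gamma>' x * x)) (at x)"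
      by (rule DERIV_mult[OF DERIV_ident deriv[OF x0(1)]])
    have d2: "((\<lambda>z. (b0 - 1) * (integral {c..z} \<gamma> - integral {c..1} \<gamma>)) has_real_derivative ((b0 - 1) * (\<gamma> x - 0))) (at x)"
      by (rule DERIV_cmult[OF DERIV_diff[OF intder[OF cg c(1) x0(2)] DERIV_const]])
    have "(g has_real_derivative (1 * \<gamma> x + \<gamma>' x * x + (b0 - 1) * (\<gamma> x - 0))) (at x)"
      unfolding g_def by (rule DERIV_add[OF d1 d2])
    moreover have "1 * \<gamma> x + \<gamma>' x * x + (b0 - 1) * (\<gamma> x - 0) = x * \<gamma>' x + b0 * \<gamma> x"
      by (simp add: algebra_simps)
    moreover have "x * \<gamma>' x + b0 * \<gamma> x \<le> 0" using H x by auto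
    ultimately show "\<exists>y. (g has_real_derivative y) (at x) \<and> y \<le> 0" by metis
  qed
  show ?thesis
  proof (rule A3I[OF cg pos b, of s1 "g s1"])
    fix s assume s: "s1 \<le> s"
    have "oint 1 s \<gamma> = integral {c..s} \<gamma> - integral {c..1} \<gamma>"
      by (rule oint_split[OF cg]) (use c s in auto)
    then show "s * \<gamma> s + (b0 - 1) * oint 1 s \<gamma> \<le> g s1" using gle[OF s] unfolding g_def by simp
  qed
qed


lemma powr_int:
  fixes N s l :: real
  assumes "0 < N" "N \<le> s" "l < 1"
  shows "((\<lambda>x. x powr (-l)) has_integral (s powr (1-l) / (1-l) - N powr (1-l) / (1-l))) {N..s}"
proof (rule fundamental_theorem_of_calculus[OF assms(2)])
  fix x assume x: "x \<in> {N..s}"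
  then have x0: "x > 0" using assms by auto
  have "((\<lambda>z. z powr (1-l) / (1-l)) has_real_derivative ((1-l) * x powr (1 - l - 1) / (1-l))) (at x)"
    by (rule DERIV_cdivide[OF has_real_derivative_powr[OF x0]])
  moreover have "(1-l) * x powr (1 - l - 1) / (1-l) = x powr (-l)" using assms by simp
  ultimately have "((\<lambda>z. z powr (1-l) / (1-l)) has_real_derivative x powr (-l)) (at x)" by simp
  then show "((\<lambda>z. z powr (1-l) / (1-l)) has_vector_derivative x powr (-l)) (at x within {N..s})"
    using has_real_derivative_iff_has_vector_derivative has_vector_derivative_at_within by blast
qed

lemma eventually_bounds:
  fixes f :: "real \<Rightarrow> real"
  assumes "Liminf at_top (\<lambda>s. ereal (f s)) = ereal Bl"
    and "Limsup at_top (\<lambda>s. ereal (f s)) = ereal Al" and e: "e > 0"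
  shows "\<exists>N. \<forall>s\<ge>N. Bl - e < f s \<and> f s < Al + e"
proof -
  have "eventually (\<lambda>s. ereal (f s) < ereal (Al + e)) at_top"
    by (rule Limsup_lessD) (use assms in simp)
  moreover have "eventually (\<lambda>s. ereal (f s) > ereal (Bl - e)) at_top"
    by (rule less_LiminfD) (use assms in simp)
  ultimately have "eventually (\<lambda>s. Bl - e < f s \<and> f s < Al + e) at_top"
    by eventually_elim simp
  then show ?thesis by (simp add: eventually_at_top_linorder)
qed

lemma caseC1:
  fixes \<gamma> :: "real \<Rightarrow> real"
  assumes cg: "continuous_on {0<..} \<gamma>" and pos: "\<And>s. s>0 \<Longrightarrow> \<gamma> s > 0"
    and l: "l \<ge> 1"
    and N: "\<forall>s\<ge>N. s powr l * \<gamma> s < Al + 1"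
  shows "A3 \<gamma>"
proof (rule A3I[OF cg pos, of 1 "max 1 N" "Al + 1"])
  fix s :: real assume s: "max 1 N \<le> s"
  have "s powr (1 - l) \<le> s powr 0" by (rule powr_mono) (use s l in auto)
  then have "s powr (1 - l) \<le> 1" using s by simp
  moreover have "s powr (1 - l) \<ge> 0" by simp
  moreover have "s powr l * \<gamma> s < Al + 1" using N s by auto
  moreover have "s powr l * \<gamma> s > 0" using pos s by simp
  moreover have "s * \<gamma> s = s powr (1 - l) * (s powr l * \<gamma> s)"
    using s by (simp add: powr_add[symmetric])
  ultimately have "s * \<gamma> s \<le> Al + 1"
    by (smt (verit, best) mult_left_le_one_le mult_right_mono)
  then show "s * \<gamma> s + (1 - 1) * oint 1 s \<gamma> \<le> Al + 1" by simp
qed auto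


lemma caseC2:
  fixes \<gamma> :: "real \<Rightarrow> real"
  assumes cg: "continuous_on {0<..} \<gamma>" and pos: "\<And>s. s>0 \<Longrightarrow> \<gamma> s > 0"
    and l: "l < 1" and l0: "0 < l" and Bl: "0 < Bl" "Bl \<le> Al" "(1 - l) * Al < Bl"
    and li: "Liminf at_top (\<lambda>s. ereal (s powr l * \<gamma> s)) = ereal Bl"
    and ls: "Limsup at_top (\<lambda>s. ereal (s powr l * \<gamma> s)) = ereal Al"
  shows "A3 \<gamma>"
proof -
  have intg: "\<gamma> integrable_on {a..b}" if "a > 0" for a b
    by (rule integrable_continuous_interval, rule continuous_on_subset[OF cg]) (use that in auto)
  have nn: "\<gamma> x \<ge> 0" if "x > 0" for x using pos[OF that] by simp
  have inn: "integral {a..b} \<gamma> \<ge> 0" if "a > 0" for a b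
    by (rule integral_nonneg[OF intg[OF that]]) (use that nn in simp)
  define q where "q = (1 - l) * Al / Bl"
  have q: "0 < q" "q < 1" using Bl l unfolding q_def by (auto simp: field_simps)
  define b0 where "b0 = (1 - q) / 2"
  have b0: "0 < b0" "b0 \<le> 1" using q unfolding b0_def by auto
  define d where "d = (1 - b0) * Bl - (1 - l) * Al"
  have qB: "q * Bl = (1 - l) * Al" unfolding q_def using Bl by simp
  have "d = (1 - b0) * Bl - q * Bl" using qB d_def by simp
  then have d: "d = (1 - q) * Bl / 2" by (simp add: b0_def field_simps)
  moreover have "(1 - q) * Bl > 0" using q Bl by simp
  ultimately have d0: "d > 0" by simp
  define e where "e = d / 2"
  have e0: "e > 0" using d0 e_def by simp
  have "Bl * q > 0" using q Bl by simp
  moreover have "2 * d = Bl - Bl * q" using d by (simp add: algebra_simps)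
  ultimately have "d \<le> Bl" using d0 by linarith
  then have eB: "e < Bl" using e_def d0 by simp
  have "(1 - l) * e \<le> e" "(1 - b0) * e \<le> e" using l l0 e0 b0 q b0_def
    by (auto simp: mult_left_le_one_le)
  moreover have "(1 - l) * (Al + e) = (1 - l) * Al + (1 - l) * e" by (simp add: algebra_simps)
  moreover have "(1 - b0) * (Bl - e) = (1 - b0) * Bl - (1 - b0) * e" by (simp add: algebra_simps)
  ultimately have key: "(1 - l) * (Al + e) \<le> (1 - b0) * (Bl - e)"
    using d_def e_def by linarith
  obtain N0 where N0: "\<forall>s\<ge>N0. Bl - e < s powr l * \<gamma> s \<and> s powr l * \<gamma> s < Al + e"
    using eventually_bounds[OF li ls e0] by blast
  define N where "N = max 1 N0"
  have N: "1 \<le> N" "N0 \<le> N" unfolding N_def by auto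
  define K where "K = (1 - b0) * (Bl - e) * (N powr (1 - l) / (1 - l))"
  show ?thesis
  proof (rule A3I[OF cg pos b0, of N K])
    fix s assume s: "N \<le> s"
    define P where "P = s powr (1 - l)"
    define Q where "Q = N powr (1 - l)"
    have P0: "P \<ge> 0" unfolding P_def by simp
    have s0: "s > 0" using s N by simp
    have o1: "oint 1 s \<gamma> = integral {1..N} \<gamma> + integral {N..s} \<gamma>"
      unfolding oint_def using s N
      by (simp add: Henstock_Kurzweil_Integration.integral_combine intg)
    have lowg: "(Bl - e) * x powr (-l) \<le> \<gamma> x" if x: "x \<in> {N..s}" for x
    proof -
      have x0: "x > 0" using x N by auto
      have "Bl - e < x powr l * \<gamma> x" using N0 x N by auto
      then have "(Bl - e) / x powr l < \<gamma> x" using x0 by (simp add: field_simps)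
      then show ?thesis using x0 by (simp add: powr_minus_divide)
    qed
    have ih: "((\<lambda>x. (Bl - e) * x powr (-l)) has_integral (Bl - e) * (P / (1-l) - Q / (1-l))) {N..s}"
      unfolding P_def Q_def by (rule has_integral_mult_right[OF powr_int]) (use N s l in auto)
    have "(Bl - e) * (P / (1-l) - Q / (1-l)) \<le> integral {N..s} \<gamma>"
      by (rule has_integral_le[OF ih integrable_integral[OF intg]]) (use lowg N in auto)
    moreover have "integral {1..N} \<gamma> \<ge> 0" by (rule inn) simp
    ultimately have oint_low: "oint 1 s \<gamma> \<ge> (Bl - e) * (P / (1-l) - Q / (1-l))" using o1 by linarith
    have "s * \<gamma> s = P * (s powr l * \<gamma> s)"
      unfolding P_def using s0 by (simp add: powr_add[symmetric])
    moreover have "s powr l * \<gamma> s \<le> Al + e" using N0 s N by (meson order.trans less_imp_le)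
    moreover have "P * (s powr l * \<gamma> s) \<le> P * (Al + e)"
      using mult_left_mono[OF \<open>s powr l * \<gamma> s \<le> Al + e\<close> P0] .
    ultimately have sg: "s * \<gamma> s \<le> P * (Al + e)" by linarith
    have t1: "(b0 - 1) * oint 1 s \<gamma> \<le> (b0 - 1) * ((Bl - e) * (P / (1-l) - Q / (1-l)))"
      using oint_low b0 by (simp add: mult_left_mono_neg)
    have pk: "P * (Al + e) \<le> (1 - b0) * (Bl - e) * (P / (1 - l))"
    proof -
      have "P * ((1 - l) * (Al + e)) \<le> P * ((1 - b0) * (Bl - e))" using key P0 by (rule mult_left_mono)
      then show ?thesis using l by (simp add: field_simps)
    qed
    define R where "R = (1 - b0) * (Bl - e) / (1 - l)"
    have r1: "(b0 - 1) * ((Bl - e) * (P / (1-l) - Q / (1-l))) = R * Q - R * P"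
      unfolding R_def using l by (simp add: field_simps)
    have r2: "(1 - b0) * (Bl - e) * (P / (1 - l)) = R * P" unfolding R_def by simp
    have r3: "K = R * Q" unfolding K_def R_def Q_def by simp
    show "s * \<gamma> s + (b0 - 1) * oint 1 s \<gamma> \<le> K"
      using sg t1 r1 r2 r3 \<open>P * (Al + e) \<le> (1 - b0) * (Bl - e) * (P / (1 - l))\<close> by linarith
  qed
qed



theorem lemma2p6:
  fixes \<gamma> \<gamma>' :: "real \<Rightarrow> real"
  assumes deriv: "\<And>s. s > 0 \<Longrightarrow> (\<gamma> has_real_derivative \<gamma>' s) (at s)"
    and cont: "continuous_on {0<..} \<gamma>'"
    and pos: "\<And>s. s > 0 \<Longrightarrow> \<gamma> s > 0"
    and cases:
      "(\<forall>s t. 0 < s \<and> s \<le> t \<longrightarrow> \<gamma> t \<le> \<gamma> s) \<and>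
          (\<exists>A>0. \<forall>s\<ge>1. integral {s .. 2 * s} \<gamma> \<le> A)
       \<or> (\<exists>b0 s1. 0 < b0 \<and> b0 \<le> 1 \<and> s1 > 0 \<and>
          (\<forall>s\<ge>s1. s * \<gamma>' s + b0 * \<gamma> s \<le> 0))
       \<or> (\<exists>l Bl Al. l > 0 \<and> 0 < Bl \<and> Bl \<le> Al \<and> (1 - l) * Al < Bl \<and>
          Liminf at_top (\<lambda>s. ereal (s powr l * \<gamma> s)) = ereal Bl \<and>
          Limsup at_top (\<lambda>s. ereal (s powr l * \<gamma> s)) = ereal Al)"
  shows "A3 \<gamma>"
  proof -
  have cg: "continuous_on {0<..} \<gamma>"
    by (rule continuous_at_imp_continuous_on) (use deriv DERIV_isCont in auto)
  from cases show ?thesis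
  proof (elim disjE conjE exE)
    fix A assume "\<forall>s t. 0 < s \<and> s \<le> t \<longrightarrow> \<gamma> t \<le> \<gamma> s" "0 < A" "\<forall>s\<ge>1. integral {s..2 * s} \<gamma> \<le> A"
    then show ?thesis using caseA[OF cg pos] by blast
  next
    fix b0 s1 assume "0 < b0" "b0 \<le> 1" "s1 > 0" "\<forall>s\<ge>s1. s * \<gamma>' s + b0 * \<gamma> s \<le> 0"
    then show ?thesis using caseB[OF deriv cg pos] by blast
  next
    fix l Bl Al assume h: "l > 0" "0 < Bl" "Bl \<le> Al" "(1 - l) * Al < Bl"
      "Liminf at_top (\<lambda>s. ereal (s powr l * \<gamma> s)) = ereal Bl"
      "Limsup at_top (\<lambda>s. ereal (s powr l * \<gamma> s)) = ereal Al"
    show ?thesis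
    proof (cases "l < 1")
      case True then show ?thesis
        by (intro caseC2[where l=l and Bl=Bl and Al=Al]) (use cg pos h in auto)
    next
      case False
      obtain N where "\<forall>s\<ge>N. Bl - 1 < s powr l * \<gamma> s \<and> s powr l * \<gamma> s < Al + 1"
        using eventually_bounds[OF h(5,6), of 1] by auto
      then show ?thesis using caseC1[OF cg pos, of l N Al] False by auto
    qed
  qed
qed

end
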